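(* Let $S$ be a $*$-regular semigroup, viewed as a DRC-semigroup with $D(a)=aa^\dagger$ and $R(a)=a^\dagger a$. Then for any $a\in S$: (i) $\vartheta_a$ and $\vartheta'_a$ are bijections, with $\vartheta_{a^\dagger}=\vartheta_a^{-1}$ and $\vartheta'_{a^\dagger}=(\vartheta'_a)^{-1}$; (ii) $\vartheta_{a^*}=\vartheta'_a$ and $\vartheta'_{a^*}=\vartheta_a$; (iii) $\Theta_{a^*}=\Delta_a$ and $\Delta_{a^*}=\Theta_a$.
   Context: A $*$-regular semigroup is a semigroup $S$ with an involution $a\mapsto a^*$ ($a^{**}=a$, $(ab)^*=b^*a^*$) such that each $a\in S$ has a (unique) element $a^\dagger$ (Moore–Penrose inverse) satisfying $aa^\dagger a=a$, $a^\dagger aa^\dagger=a^\dagger$, $(aa^\dagger)^*=aa^\dagger$, $(a^\dagger a)^*=a^\dagger a$. With $D(a)=aa^\dagger$, $R(a)=a^\dagger a$, $S$ is a DRC-semigroup. Let $P=\{D(a):a\in S\}$, ordered by $p\le q\iff p=pq=qp$, and $t^\downarrow=\{s\in P:s\le t\}$. For $a\in S$ define (maps written on the right) $\vartheta_a:D(a)^\downarrow\to R(a)^\downarrow$, $p\vartheta_a=R(pa)$; $\vartheta'_a:R(a)^\downarrow\to D(a)^\downarrow$, $q\vartheta'_a=D(aq)$; $\Theta_a,\Delta_a:P\to P$, $p\Theta_a=R(pa)$, $p\Delta_a=D(ap)$. *)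

theory Defs
  imports "HOL-Library.FuncSet"
begin

definition is_mp_inverse :: "('a::semigroup_mult \<Rightarrow> 'a) \<Rightarrow> 'a \<Rightarrow> 'a \<Rightarrow> bool" where
  "is_mp_inverse st a b \<longleftrightarrow> a * b * a = a \<and> b * a * b = b \<and>
     st (a * b) = a * b \<and> st (b * a) = b * a"

definition star_regular :: "('a::semigroup_mult \<Rightarrow> 'a) \<Rightarrow> bool" where
  "star_regular st \<longleftrightarrow> (\<forall>a. st (st a) = a) \<and> (\<forall>a b. st (a * b) = st b * st a)
     \<and> (\<forall>a. \<exists>b. is_mp_inverse st a b)"

text \<open>The Moore-Penrose inverse (unique in a star-regular semigroup).\<close>
definition mpinv :: "('a::semigroup_mult \<Rightarrow> 'a) \<Rightarrow> 'a \<Rightarrow> 'a" where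
  "mpinv st a = (THE b. is_mp_inverse st a b)"

definition Dop :: "('a::semigroup_mult \<Rightarrow> 'a) \<Rightarrow> 'a \<Rightarrow> 'a" where
  "Dop st a = a * mpinv st a"

definition Rop :: "('a::semigroup_mult \<Rightarrow> 'a) \<Rightarrow> 'a \<Rightarrow> 'a" where
  "Rop st a = mpinv st a * a"

definition projs :: "('a::semigroup_mult \<Rightarrow> 'a) \<Rightarrow> 'a set" where
  "projs st = {Dop st a | a. True}"

definition ple :: "'a::semigroup_mult \<Rightarrow> 'a \<Rightarrow> bool" where
  "ple p q \<longleftrightarrow> p = p * q \<and> p = q * p"

definition down :: "('a::semigroup_mult \<Rightarrow> 'a) \<Rightarrow> 'a \<Rightarrow> 'a set" where
  "down st t = {s \<in> projs st. ple s t}"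

definition vtheta :: "('a::semigroup_mult \<Rightarrow> 'a) \<Rightarrow> 'a \<Rightarrow> 'a \<Rightarrow> 'a" where
  "vtheta st a = restrict (\<lambda>p. Rop st (p * a)) (down st (Dop st a))"

definition vtheta' :: "('a::semigroup_mult \<Rightarrow> 'a) \<Rightarrow> 'a \<Rightarrow> 'a \<Rightarrow> 'a" where
  "vtheta' st a = restrict (\<lambda>q. Dop st (a * q)) (down st (Rop st a))"

definition Theta :: "('a::semigroup_mult \<Rightarrow> 'a) \<Rightarrow> 'a \<Rightarrow> 'a \<Rightarrow> 'a" where
  "Theta st a = restrict (\<lambda>p. Rop st (p * a)) (projs st)"

definition Delta :: "('a::semigroup_mult \<Rightarrow> 'a) \<Rightarrow> 'a \<Rightarrow> 'a \<Rightarrow> 'a" where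
  "Delta st a = restrict (\<lambda>p. Dop st (a * p)) (projs st)"

end

theory Submission imports Defs begin

lemma sr_inv: "star_regular st \<Longrightarrow> st (st x) = x" by (simp add: star_regular_def)
lemma sr_mul: "star_regular st \<Longrightarrow> st (x * y) = st y * st x" by (simp add: star_regular_def)

lemma mp_unique:
  assumes sr: "star_regular st" and b: "is_mp_inverse st a b" and c: "is_mp_inverse st a c"
  shows "b = c"
proof -
  note I = sr_inv[OF sr] and M = sr_mul[OF sr]
  from b have b1: "a*b*a = a" and b2: "b*a*b = b" and b3: "st (a*b) = a*b" and b4: "st (b*a) = b*a"
    by (auto simp: is_mp_inverse_def)
  from c have c1: "a*c*a = a" and c2: "c*a*c = c" and c3: "st (a*c) = a*c" and c4: "st (c*a) = c*a"
    by (auto simp: is_mp_inverse_def)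
  have sa: "st a = st a * st c * st a" using c1 M by (metis mult.assoc)
  have sa2: "st a = st a * st b * st a" using b1 M by (metis mult.assoc)
  have "b = b * st (a*b)" using b2 b3 by (simp add: mult.assoc)
  also have "\<dots> = b * st b * st a" using M by (simp add: mult.assoc)
  also have "\<dots> = b * st b * (st a * st c * st a)" using sa by simp
  also have "\<dots> = b * st (a*b) * st (a*c)" using M by (simp add: mult.assoc)
  also have "\<dots> = b * a * c" using b2 b3 c3 by (simp add: mult.assoc)
  finally have bb: "b = b*a*c" .
  have "c = st (c*a) * c" using c2 c4 by (simp add: mult.assoc)
  also have "\<dots> = st a * st c * c" using M by (simp add: mult.assoc)
  also have "\<dots> = (st a * st b * st a) * st c * c" using sa2 by simp
  also have "\<dots> = st (b*a) * st (c*a) * c" using M by (simp add: mult.assoc)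
  also have "\<dots> = b * a * c" using c1 c2 b4 c4 by (simp add: mult.assoc)
  finally show ?thesis using bb by simp
qed

lemma mp_is: "star_regular st \<Longrightarrow> is_mp_inverse st a (mpinv st a)"
  unfolding mpinv_def by (rule theI') (metis mp_unique star_regular_def)

lemma mp_eq: "star_regular st \<Longrightarrow> is_mp_inverse st a b \<Longrightarrow> mpinv st a = b"
  using mp_is mp_unique by blast

lemma mp1: "star_regular st \<Longrightarrow> a * mpinv st a * a = a" using mp_is is_mp_inverse_def by blast
lemma mp2: "star_regular st \<Longrightarrow> mpinv st a * a * mpinv st a = mpinv st a" using mp_is is_mp_inverse_def by blast
lemma mp3: "star_regular st \<Longrightarrow> st (a * mpinv st a) = a * mpinv st a" using mp_is is_mp_inverse_def by blast
lemma mp4: "star_regular st \<Longrightarrow> st (mpinv st a * a) = mpinv st a * a" using mp_is is_mp_inverse_def by blast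

lemma mpmp: "star_regular st \<Longrightarrow> mpinv st (mpinv st a) = a"
  by (rule mp_eq) (auto simp: is_mp_inverse_def mp1 mp2 mp3 mp4)

lemma mpst: "star_regular st \<Longrightarrow> mpinv st (st a) = st (mpinv st a)"
  apply (rule mp_eq, assumption)
  apply (simp add: is_mp_inverse_def sr_mul[symmetric] sr_inv mult.assoc)
  by (metis mp1 mp2 mp3 mp4 mult.assoc)

lemma D_st: "star_regular st \<Longrightarrow> Dop st (st a) = Rop st a"
  by (simp add: Dop_def Rop_def mpst sr_mul[symmetric] mp4)
lemma R_st: "star_regular st \<Longrightarrow> Rop st (st a) = Dop st a"
  by (simp add: Dop_def Rop_def mpst sr_mul[symmetric] mp3)
lemma R_D: "star_regular st \<Longrightarrow> Rop st a = Dop st (mpinv st a)"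
  by (simp add: Dop_def Rop_def mpmp)
lemma D_R: "star_regular st \<Longrightarrow> Dop st a = Rop st (mpinv st a)"
  by (simp add: Dop_def Rop_def mpmp)

lemma proj_st: "star_regular st \<Longrightarrow> p \<in> projs st \<Longrightarrow> st p = p"
  by (auto simp: projs_def Dop_def mp3)
lemma proj_idem: "star_regular st \<Longrightarrow> p \<in> projs st \<Longrightarrow> p * p = p"
  by (auto simp: projs_def Dop_def) (metis mp1 mult.assoc)
lemma proj_mp: "star_regular st \<Longrightarrow> p \<in> projs st \<Longrightarrow> mpinv st p = p"
  by (rule mp_eq) (auto simp: is_mp_inverse_def proj_st proj_idem)
lemma proj_D: "star_regular st \<Longrightarrow> p \<in> projs st \<Longrightarrow> Dop st p = p"
  by (simp add: Dop_def proj_mp proj_idem)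
lemma D_proj: "Dop st a \<in> projs st" by (auto simp: projs_def)
lemma R_proj: "star_regular st \<Longrightarrow> Rop st a \<in> projs st" by (simp add: R_D D_proj)

lemma D_below:
  assumes sr: "star_regular st" and p: "p \<in> projs st" and le: "ple p (Dop st a)"
  shows "Dop st (p * a) = p"
proof -
  define x where "x = p * a"
  define y where "y = mpinv st x"
  have pa: "x * mpinv st a = p" using le by (simp add: x_def ple_def Dop_def mult.assoc)
  have xy: "x * y * x = x" using mp1[OF sr] y_def by simp
  have "x * y * p = p" using xy pa by (metis mult.assoc)
  hence "st (x * y * p) = p" using proj_st[OF sr p] by simp
  moreover have "st (x * y * p) = st p * st (x * y)" by (rule sr_mul[OF sr])
  ultimately have 1: "p * (x * y) = p" using proj_st[OF sr p] mp3[OF sr, of x] y_def by simp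
  have 2: "p * (x * y) = x * y" using proj_idem[OF sr p] x_def by (simp add: mult.assoc[symmetric])
  show ?thesis using 1 2 by (simp add: Dop_def x_def y_def)
qed

lemma R_below:
  assumes sr: "star_regular st"
  shows "ple (Rop st (p * a)) (Rop st a)"
proof -
  have 1: "Rop st (p * a) * Rop st a = Rop st (p * a)"
    using mp1[OF sr, of a] by (simp add: Rop_def mult.assoc)
  have s1: "st (Rop st x) = Rop st x" for x using mp4[OF sr] by (simp add: Rop_def)
  have "st (Rop st (p * a) * Rop st a) = st (Rop st a) * st (Rop st (p * a))" by (rule sr_mul[OF sr])
  hence "st (Rop st (p * a) * Rop st a) = Rop st a * Rop st (p * a)" by (simp only: s1)
  hence 2: "Rop st a * Rop st (p * a) = Rop st (p * a)" using 1 s1 by simp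
  show ?thesis using 1 2 by (simp add: ple_def)
qed

lemma back_lem:
  assumes sr: "star_regular st" and p: "p \<in> projs st" and le: "ple p (Dop st a)"
  shows "Rop st (Rop st (p * a) * mpinv st a) = p"
proof -
  define x where "x = p * a"
  define y where "y = mpinv st x"
  have pa: "x * mpinv st a = p" using le by (simp add: x_def ple_def Dop_def mult.assoc)
  have xy: "x * y = p" using D_below[OF assms] by (simp add: Dop_def x_def y_def)
  have "Rop st x * mpinv st a = y * p" using pa by (simp add: Rop_def y_def mult.assoc)
  also have "\<dots> = y" using xy mp2[OF sr, of x] y_def by (simp add: mult.assoc)
  finally have "Rop st x * mpinv st a = y" .
  thus ?thesis using xy by (simp add: x_def y_def Rop_def mpmp[OF sr])
qed

lemma vtheta_st: "star_regular st \<Longrightarrow> vtheta st (st a) = vtheta' st a"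
  unfolding vtheta_def vtheta'_def
  apply (simp add: D_st)
  apply (rule restrict_ext)
proof -
  fix p assume "star_regular st" "p \<in> down st (Rop st a)"
  hence "st p = p" by (simp add: down_def proj_st)
  hence "p * st a = st (a * p)" using sr_mul[OF \<open>star_regular st\<close>, of a p] by simp
  thus "Rop st (p * st a) = Dop st (a * p)" using R_st[OF \<open>star_regular st\<close>] by simp
qed

lemma vtheta'_st: "star_regular st \<Longrightarrow> vtheta' st (st a) = vtheta st a"
  unfolding vtheta_def vtheta'_def
  apply (simp add: R_st)
  apply (rule restrict_ext)
proof -
  fix p assume "star_regular st" "p \<in> down st (Dop st a)"
  hence "st p = p" by (simp add: down_def proj_st)
  hence "st a * p = st (p * a)" using sr_mul[OF \<open>star_regular st\<close>, of p a] by simp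
  thus "Dop st (st a * p) = Rop st (p * a)" using D_st[OF \<open>star_regular st\<close>] by simp
qed

lemma Theta_st: "star_regular st \<Longrightarrow> Theta st (st a) = Delta st a"
  unfolding Theta_def Delta_def
  apply (rule restrict_ext)
proof -
  fix p assume "star_regular st" "p \<in> projs st"
  hence "st p = p" by (simp add: proj_st)
  hence "p * st a = st (a * p)" using sr_mul[OF \<open>star_regular st\<close>, of a p] by simp
  thus "Rop st (p * st a) = Dop st (a * p)" using R_st[OF \<open>star_regular st\<close>] by simp
qed

lemma Delta_st: "star_regular st \<Longrightarrow> Delta st (st a) = Theta st a"
  unfolding Theta_def Delta_def
  apply (rule restrict_ext)
proof -
  fix p assume "star_regular st" "p \<in> projs st"
  hence "st p = p" by (simp add: proj_st)
  hence "st a * p = st (p * a)" using sr_mul[OF \<open>star_regular st\<close>, of p a] by simp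
  thus "Dop st (st a * p) = Rop st (p * a)" using D_st[OF \<open>star_regular st\<close>] by simp
qed

lemma main_i:
  assumes sr: "star_regular st"
  shows "bij_betw (vtheta st a) (down st (Dop st a)) (down st (Rop st a))
       \<and> vtheta st (mpinv st a) =
           restrict (the_inv_into (down st (Dop st a)) (vtheta st a)) (down st (Rop st a))"
proof -
  let ?A = "down st (Dop st a)" and ?B = "down st (Rop st a)"
  let ?f = "vtheta st a" and ?g = "vtheta st (mpinv st a)"
  have DB: "Dop st (mpinv st a) = Rop st a" using R_D[OF sr] by simp
  have f_in: "?f p \<in> ?B" if "p \<in> ?A" for p
    using that R_below[OF sr] R_proj[OF sr] by (simp add: vtheta_def down_def)
  have g_in: "?g q \<in> ?A" if "q \<in> ?B" for q
    using that R_below[OF sr, of q "mpinv st a"] R_proj[OF sr] DB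
    by (simp add: vtheta_def down_def D_R[OF sr])
  have gf: "?g (?f p) = p" if "p \<in> ?A" for p
    using that f_in[OF that] back_lem[OF sr] DB by (simp add: vtheta_def down_def)
  have fg: "?f (?g q) = q" if "q \<in> ?B" for q
    using that g_in[OF that] back_lem[OF sr, of q "mpinv st a"] DB
    by (simp add: vtheta_def down_def mpmp[OF sr])
  have inj: "inj_on ?f ?A" by (metis gf inj_onI)
  have bij: "bij_betw ?f ?A ?B"
    by (rule bij_betw_byWitness[where f'="?g"]) (use gf fg f_in g_in in auto)
  have "?g = restrict (the_inv_into ?A ?f) ?B"
  proof
    fix q show "?g q = restrict (the_inv_into ?A ?f) ?B q"
    proof (cases "q \<in> ?B")
      case True thus ?thesis using the_inv_into_f_eq[OF inj fg[OF True] g_in[OF True]] by simp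
    next
      case False thus ?thesis by (simp add: vtheta_def DB)
    qed
  qed
  thus ?thesis using bij by simp
qed

theorem proposition9p12:
  fixes st :: "'a::semigroup_mult \<Rightarrow> 'a" and a :: 'a
  assumes "star_regular st"
  shows "bij_betw (vtheta st a) (down st (Dop st a)) (down st (Rop st a))
       \<and> bij_betw (vtheta' st a) (down st (Rop st a)) (down st (Dop st a))
       \<and> vtheta st (mpinv st a) =
           restrict (the_inv_into (down st (Dop st a)) (vtheta st a)) (down st (Rop st a))
       \<and> vtheta' st (mpinv st a) =
           restrict (the_inv_into (down st (Rop st a)) (vtheta' st a)) (down st (Dop st a))
       \<and> vtheta st (st a) = vtheta' st a
       \<and> vtheta' st (st a) = vtheta st a
       \<and> Theta st (st a) = Delta st a
       \<and> Delta st (st a) = Theta st a"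
proof -
  note sr = assms
  have D: "Dop st (st a) = Rop st a" "Rop st (st a) = Dop st a" using D_st[OF sr] R_st[OF sr] by auto
  have m2: "bij_betw (vtheta' st a) (down st (Rop st a)) (down st (Dop st a))
       \<and> vtheta' st (mpinv st a) =
           restrict (the_inv_into (down st (Rop st a)) (vtheta' st a)) (down st (Dop st a))"
    using main_i[OF sr, of "st a"] by (simp only: D mpst[OF sr] vtheta_st[OF sr])
  show ?thesis
    using main_i[OF sr, of a] m2
      vtheta_st[OF sr] vtheta'_st[OF sr] Theta_st[OF sr] Delta_st[OF sr]
    by blast
qed

end
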